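(* Let $\mu$ satisfy Assumption A (see context), let $t>1$, and let $\mathcal{K}$ be a compact subset of $\mathbb{C}^+\cup\mathbb{R}$. Then there exists a constant $C>0$ such that $|\omega_t(z)|\le C$ for all $z\in\mathcal{K}$.
   Context: Assumption A: $n_{\mathrm{ac}},n_{\mathrm{pp}},n^{\mathrm{out}}_{\mathrm{pp}}\ge1$ integers; $\mu$ is a compactly supported Borel probability measure on $\mathbb{R}$ whose singular part is supported on a finite set $\{x_1,\dots,x_{n_{\mathrm{pp}}}\}$, whose absolutely continuous part $\mu_{\mathrm{ac}}$ is supported on $n_{\mathrm{ac}}$ intervals $[E_j^-,E_j^+]$, with exactly $n^{\mathrm{out}}_{\mathrm{pp}}$ atoms outside $\mathrm{supp}(\mu_{\mathrm{ac}})$, no atom at the endpoints $E_j^\pm$, and density $\rho$ with $C_j^{-1}<\rho(x)/\big((x-E_j^-)^{t_j^-}(E_j^+-x)^{t_j^+}\big)<C_j$ a.e. on $[E_j^-,E_j^+]$ for some $-1<t_j^\pm<1$, $C_j\ge1$. $m_\mu(z)=\int\frac{1}{x-z}\mu(dx)$, $F_\mu=-1/m_\mu$. $\omega_t:\mathbb{C}^+\to\mathbb{C}^+$ is the analytic subordination function with $\mathrm{Im}\,\omega_t(z)\ge\mathrm{Im}\,z$, $\omega_t(i\eta)/(i\eta)\to1$, $t\omega_t(z)-z=(t-1)F_\mu(\omega_t(z))$, extended continuously to $\mathbb{C}^+\cup\mathbb{R}$ with values in $\mathbb{C}^+\cup\mathbb{R}\cup\{\infty\}$. *)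

theory Defs
  imports "HOL-Probability.Probability"
begin

definition upper_half :: "complex set" where
  "upper_half = {z. Im z > 0}"

definition assumptionA :: "nat \<Rightarrow> nat \<Rightarrow> nat \<Rightarrow> real measure \<Rightarrow> bool" where
  "assumptionA nac npp nout \<mu> \<longleftrightarrow>
     nac \<ge> 1 \<and> npp \<ge> 1 \<and> nout \<ge> 1 \<and>
     prob_space \<mu> \<and> sets \<mu> = sets borel \<and>
     (\<exists>P w \<rho> Em Ep tm tp Cj.
        finite P \<and> card P = npp \<and> (\<forall>p\<in>P. w p > (0::real)) \<and>
        \<rho> \<in> borel_measurable borel \<and> (\<forall>x. \<rho> x \<ge> (0::real)) \<and>
        (\<forall>A\<in>sets borel. emeasure \<mu> A =
            (\<integral>\<^sup>+x\<in>A. ennreal (\<rho> x) \<partial>lborel) +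
            (\<Sum>p\<in>P. if p \<in> A then ennreal (w p) else 0)) \<and>
        (\<forall>j<nac. Em j < (Ep j :: real)) \<and>
        (\<forall>j. Suc j < nac \<longrightarrow> Ep j < Em (Suc j)) \<and>
        (\<forall>x. (\<forall>j<nac. x \<notin> {Em j..Ep j}) \<longrightarrow> \<rho> x = 0) \<and>
        (\<forall>j<nac. -1 < tm j \<and> tm j < (1::real) \<and> -1 < tp j \<and> tp j < (1::real) \<and>
           Cj j \<ge> (1::real) \<and>
           (AE x in lborel. x \<in> {Em j..Ep j} \<longrightarrow>
              1 / Cj j < \<rho> x / ((x - Em j) powr tm j * (Ep j - x) powr tp j) \<and>
              \<rho> x / ((x - Em j) powr tm j * (Ep j - x) powr tp j) < Cj j)) \<and>
        (\<forall>j<nac. Em j \<notin> P \<and> Ep j \<notin> P) \<and>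
        card {p\<in>P. \<forall>j<nac. p \<notin> {Em j..Ep j}} = nout)"

definition stieltjes :: "real measure \<Rightarrow> complex \<Rightarrow> complex" where
  "stieltjes \<mu> z = (\<integral>x. 1 / (complex_of_real x - z) \<partial>\<mu>)"

definition F_of :: "real measure \<Rightarrow> complex \<Rightarrow> complex" where
  "F_of \<mu> z = - 1 / stieltjes \<mu> z"

text \<open>Subordination function omega_t on the upper half plane, together with its
  continuous extension omext to the closed upper half plane with values in
  the closed upper half plane or infinity (None encodes infinity).\<close>
definition is_subordination ::
  "real measure \<Rightarrow> real \<Rightarrow> (complex \<Rightarrow> complex) \<Rightarrow> (complex \<Rightarrow> complex option) \<Rightarrow> bool" where
  "is_subordination \<mu> t \<omega> omext \<longleftrightarrow>
     \<omega> holomorphic_on upper_half \<and>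
     (\<forall>z\<in>upper_half. Im (\<omega> z) \<ge> Im z) \<and>
     ((\<lambda>\<eta>::real. \<omega> (\<i> * of_real \<eta>) / (\<i> * of_real \<eta>)) \<longlongrightarrow> 1) at_top \<and>
     (\<forall>z\<in>upper_half. of_real t * \<omega> z - z = of_real (t - 1) * F_of \<mu> (\<omega> z)) \<and>
     (\<forall>z\<in>upper_half. omext z = Some (\<omega> z)) \<and>
     (\<forall>x::real. case omext (of_real x) of
         Some w \<Rightarrow> Im w \<ge> 0 \<and> (\<omega> \<longlongrightarrow> w) (at (of_real x) within upper_half)
       | None \<Rightarrow> filterlim \<omega> at_infinity (at (of_real x) within upper_half))"

end

theory Submission
  imports Defs
begin

lemma norm_int_le:
  fixes f :: "real \<Rightarrow> complex"
  assumes "prob_space \<mu>" "integrable \<mu> f" "AE x in \<mu>. norm (f x) \<le> B"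
  shows "norm (integral\<^sup>L \<mu> f) \<le> B"
proof -
  have "norm (integral\<^sup>L \<mu> f) \<le> (\<integral>x. norm (f x) \<partial>\<mu>)" by (rule integral_norm_bound)
  also have "\<dots> \<le> B"
    using prob_space.integral_le_const[OF assms(1) integrable_norm[OF assms(2)] assms(3)] .
  finally show ?thesis .
qed

lemma F_bound:
  assumes P: "prob_space \<mu>" and S: "sets \<mu> = sets borel" and AEM: "AE x in \<mu>. \<bar>x\<bar> \<le> M"
    and M: "M > 0" and w: "Im w > 0" "cmod w \<ge> 3*M"
  shows "cmod (F_of \<mu> w - w) \<le> 3*M"
proof -
  interpret prob_space \<mu> by (rule P)
  have nz: "complex_of_real x - w \<noteq> 0" for x using w(1) by (auto simp: complex_eq_iff)
  have low: "cmod (complex_of_real x - w) \<ge> cmod w - M" if "\<bar>x\<bar> \<le> M" for x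
  proof -
    have "cmod w - cmod (complex_of_real x) \<le> cmod (complex_of_real x - w)"
      by (metis norm_minus_commute norm_triangle_ineq2)
    then show ?thesis using that by simp
  qed
  have wM: "cmod w - M \<ge> 2*M" using w M by simp
  have m1: "(\<lambda>x. 1 / (complex_of_real x - w)) \<in> borel_measurable \<mu>"
    unfolding measurable_cong_sets[OF S refl] by measurable
  have m2: "(\<lambda>x. complex_of_real x / (complex_of_real x - w)) \<in> borel_measurable \<mu>"
    unfolding measurable_cong_sets[OF S refl] by measurable
  have b1: "AE x in \<mu>. cmod (1 / (complex_of_real x - w)) \<le> 1 / (cmod w - M)"
    using AEM
  proof eventually_elim
    case (elim x)
    show ?case using low[OF elim] wM M by (simp add: norm_divide frac_le)
  qed
  have b2: "AE x in \<mu>. cmod (complex_of_real x / (complex_of_real x - w)) \<le> M / (cmod w - M)"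
    using AEM
  proof eventually_elim
    case (elim x)
    show ?case using low[OF elim] wM M elim by (simp add: norm_divide frac_le)
  qed
  have i1: "integrable \<mu> (\<lambda>x. 1 / (complex_of_real x - w))"
    by (rule integrable_const_bound[OF b1 m1])
  have i2: "integrable \<mu> (\<lambda>x. complex_of_real x / (complex_of_real x - w))"
    by (rule integrable_const_bound[OF b2 m2])
  define Sx where "Sx = (\<integral>x. complex_of_real x / (complex_of_real x - w) \<partial>\<mu>)"
  define m where "m = stieltjes \<mu> w"
  have Sb: "cmod Sx \<le> M / (cmod w - M)"
    unfolding Sx_def by (rule norm_int_le[OF P i2 b2])
  have "w * m = (\<integral>x. w * (1 / (complex_of_real x - w)) \<partial>\<mu>)"
    unfolding m_def stieltjes_def by (rule integral_mult_right_zero[symmetric])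
  also have "\<dots> = (\<integral>x. complex_of_real x / (complex_of_real x - w) - 1 \<partial>\<mu>)"
  proof (rule Bochner_Integration.integral_cong[OF refl])
    fix x show "w * (1 / (complex_of_real x - w)) = complex_of_real x / (complex_of_real x - w) - 1"
      using nz[of x] by (simp add: field_simps)
  qed
  also have "\<dots> = Sx - 1"
    unfolding Sx_def using i2 by (simp add: Bochner_Integration.integral_diff prob_space)
  finally have wm: "w * m = Sx - 1" .
  have Mq: "M / (cmod w - M) \<le> 1/2" using wM M by (simp add: field_simps)
  have "cmod (w*m) \<ge> 1/2"
  proof -
    have "1 - cmod Sx \<le> cmod (Sx - 1)" by (metis norm_one norm_triangle_ineq2 norm_minus_commute)
    then show ?thesis unfolding wm using Sb Mq by linarith
  qed
  hence mnz: "m \<noteq> 0" by auto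
  have wnz: "w \<noteq> 0" using w(1) by auto
  have "F_of \<mu> w - w = - Sx * w / (w * m)"
  proof -
    have "F_of \<mu> w - w = - (1 + w*m) / m"
      unfolding F_of_def m_def[symmetric] using mnz by (simp add: field_simps)
    also have "1 + w*m = Sx" using wm by simp
    also have "- Sx / m = - Sx * w / (w * m)" using wnz by simp
    finally show ?thesis .
  qed
  hence "cmod (F_of \<mu> w - w) = cmod Sx * cmod w / cmod (w*m)"
    by (simp add: norm_divide norm_mult)
  also have "\<dots> \<le> (M / (cmod w - M)) * cmod w / (1/2)"
    using Sb \<open>cmod (w*m) \<ge> 1/2\<close> wM M by (intro frac_le mult_right_mono) auto
  also have "\<dots> \<le> 3*M"
    using wM M by (simp add: field_simps)
  finally show ?thesis .
qed

lemma supp_bound: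
  assumes "assumptionA nac npp nout \<mu>"
  shows "\<exists>M>0. AE x in \<mu>. \<bar>x\<bar> \<le> M"
proof -
  from assms obtain P w \<rho> Em Ep where
    fin: "finite P" and S: "sets \<mu> = sets borel" and
    em: "\<forall>A\<in>sets borel. emeasure \<mu> A =
            (\<integral>\<^sup>+x\<in>A. ennreal (\<rho> x) \<partial>lborel) +
            (\<Sum>p\<in>P. if p \<in> A then ennreal (w p) else 0)" and
    rho0: "\<forall>x. (\<forall>j<nac. x \<notin> {Em j..Ep j}) \<longrightarrow> \<rho> x = 0"
    unfolding assumptionA_def by blast
  define M where "M = 1 + (\<Sum>j<nac. \<bar>Em j\<bar> + \<bar>Ep j\<bar>) + (\<Sum>p\<in>P. \<bar>p\<bar>)"
  have s1: "(\<Sum>j<nac. \<bar>Em j\<bar> + \<bar>Ep j\<bar>) \<ge> 0" by (simp add: sum_nonneg)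
  have s2: "(\<Sum>p\<in>P. \<bar>p\<bar>) \<ge> 0" by (simp add: sum_nonneg)
  have Mpos: "M > 0" unfolding M_def using s1 s2 by linarith
  have bj: "\<bar>Em j\<bar> + \<bar>Ep j\<bar> \<le> M" if "j < nac" for j
  proof -
    have "\<bar>Em j\<bar> + \<bar>Ep j\<bar> \<le> (\<Sum>j<nac. \<bar>Em j\<bar> + \<bar>Ep j\<bar>)"
      by (rule member_le_sum) (use that in auto)
    then show ?thesis unfolding M_def using s2 by linarith
  qed
  have bp: "\<bar>p\<bar> \<le> M" if "p \<in> P" for p
  proof -
    have "\<bar>p\<bar> \<le> (\<Sum>p\<in>P. \<bar>p\<bar>)"
      by (rule member_le_sum) (use that fin in auto)
    then show ?thesis unfolding M_def using s1 by linarith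
  qed
  define A where "A = {x::real. M < \<bar>x\<bar>}"
  have Ab: "A \<in> sets borel" unfolding A_def by measurable
  have rA: "\<rho> x = 0" if "x \<in> A" for x
  proof -
    have "\<forall>j<nac. x \<notin> {Em j..Ep j}"
    proof (intro allI impI)
      fix j assume "j < nac"
      from bj[OF this] that show "x \<notin> {Em j..Ep j}" unfolding A_def by auto
    qed
    with rho0 show ?thesis by blast
  qed
  have "(\<integral>\<^sup>+x\<in>A. ennreal (\<rho> x) \<partial>lborel) = (\<integral>\<^sup>+x. 0 \<partial>(lborel::real measure))"
    by (rule nn_integral_cong) (auto simp: indicator_def rA)
  moreover have "(\<Sum>p\<in>P. if p \<in> A then ennreal (w p) else 0) = 0"
    by (rule sum.neutral) (use bp in \<open>force simp: A_def\<close>)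
  ultimately have "emeasure \<mu> A = 0" using em Ab by simp
  moreover have "A \<in> sets \<mu>" using Ab S by simp
  ultimately have "AE x in \<mu>. \<bar>x\<bar> \<le> M"
    by (intro AE_I[where N=A]) (auto simp: A_def)
  with Mpos show ?thesis by blast
qed

theorem lemma3p3:
  fixes \<mu> :: "real measure" and t :: real and K :: "complex set"
    and \<omega> :: "complex \<Rightarrow> complex" and omext :: "complex \<Rightarrow> complex option"
  assumes "assumptionA nac npp nout \<mu>"
    and "t > 1"
    and "is_subordination \<mu> t \<omega> omext"
    and "compact K" and "K \<subseteq> {z. Im z \<ge> 0}"
  shows "\<exists>C>0. \<forall>z\<in>K. \<exists>w. omext z = Some w \<and> cmod w \<le> C"
proof -
  obtain M where M: "M > 0" and AEM: "AE x in \<mu>. \<bar>x\<bar> \<le> M"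
    using supp_bound[OF assms(1)] by blast
  have P: "prob_space \<mu>" and S: "sets \<mu> = sets borel"
    using assms(1) unfolding assumptionA_def by auto
  have geq: "\<forall>z\<in>upper_half. Im (\<omega> z) \<ge> Im z"
    and eq: "\<forall>z\<in>upper_half. of_real t * \<omega> z - z = of_real (t - 1) * F_of \<mu> (\<omega> z)"
    and ext: "\<forall>z\<in>upper_half. omext z = Some (\<omega> z)"
    and bnd: "\<forall>x::real. case omext (of_real x) of
         Some w \<Rightarrow> Im w \<ge> 0 \<and> (\<omega> \<longlongrightarrow> w) (at (of_real x) within upper_half)
       | None \<Rightarrow> filterlim \<omega> at_infinity (at (of_real x) within upper_half)"
    using assms(3) unfolding is_subordination_def by auto
  have t: "t > 1" by (rule assms(2))
  have wb: "cmod (\<omega> z) \<le> cmod z + 3*M*t" if zU: "z \<in> upper_half" for z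
  proof -
    define w where "w = \<omega> z"
    have Iw: "Im w > 0" using geq zU unfolding w_def upper_half_def by force
    show ?thesis
    proof (cases "cmod w < 3*M")
      case True
      have "3*M \<le> 3*M*t" using M t by simp
      then show ?thesis using True unfolding w_def by (smt (verit) norm_ge_zero)
    next
      case False
      have Fb: "cmod (F_of \<mu> w - w) \<le> 3*M" by (rule F_bound[OF P S AEM M Iw]) (use False in simp)
      have Fw: "cmod (F_of \<mu> w) \<le> cmod w + 3*M"
        using Fb norm_triangle_ineq2[of "F_of \<mu> w" w] by linarith
      have e: "of_real t * w - z = of_real (t - 1) * F_of \<mu> w" using eq zU unfolding w_def by blast
      have "t * cmod w - cmod z \<le> cmod (of_real t * w - z)"
        using norm_triangle_ineq2[of "of_real t * w" z] t by (simp add: norm_mult)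
      also have "\<dots> = (t - 1) * cmod (F_of \<mu> w)" unfolding e norm_mult norm_of_real using t by simp
      also have "\<dots> \<le> (t - 1) * (cmod w + 3*M)" using Fw t by (intro mult_left_mono) auto
      finally have "t * cmod w - cmod z \<le> (t - 1) * (cmod w + 3*M)" .
      hence "cmod w \<le> cmod z + 3*M*(t-1)" by (simp add: algebra_simps)
      also have "\<dots> \<le> cmod z + 3*M*t" using M by simp
      finally show ?thesis unfolding w_def .
    qed
  qed
  obtain R where R: "\<forall>z\<in>K. cmod z \<le> R"
    using compact_imp_bounded[OF assms(4)] unfolding bounded_iff by blast
  define C where "C = \<bar>R\<bar> + 3*M*t + 1"
  have Cpos: "C > 0" unfolding C_def using M t by (smt (verit) mult_pos_pos)
  have "\<forall>z\<in>K. \<exists>w. omext z = Some w \<and> cmod w \<le> C"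
  proof
    fix z assume zK: "z \<in> K"
    have zR: "cmod z \<le> \<bar>R\<bar>" using R zK by force
    show "\<exists>w. omext z = Some w \<and> cmod w \<le> C"
    proof (cases "Im z > 0")
      case True
      hence zU: "z \<in> upper_half" by (simp add: upper_half_def)
      show ?thesis using ext zU wb[OF zU] zR unfolding C_def by force
    next
      case False
      with zK assms(5) have "Im z = 0" by force
      define x where "x = Re z"
      have zx: "z = of_real x" unfolding x_def using \<open>Im z = 0\<close> by (simp add: complex_eq_iff)
      have ntriv: "at z within upper_half \<noteq> bot"
      proof -
        have "z islimpt upper_half"
          unfolding islimpt_approachable
        proof (intro allI impI)
          fix e :: real assume e: "e > 0"
          show "\<exists>x'\<in>upper_half. x' \<noteq> z \<and> dist x' z < e"
            by (rule bexI[of _ "z + \<i> * of_real (e/2)"])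
               (use e \<open>Im z = 0\<close> in \<open>auto simp: upper_half_def dist_norm norm_mult complex_eq_iff\<close>)
        qed
        then show ?thesis using trivial_limit_within by blast
      qed
      have ev: "\<forall>\<^sub>F y in at z within upper_half. cmod (\<omega> y) \<le> cmod y + 3*M*t"
        unfolding eventually_at_filter using wb by (simp add: always_eventually)
      have lim1: "((\<lambda>y. cmod y + 3*M*t) \<longlongrightarrow> cmod z + 3*M*t) (at z within upper_half)"
        by (intro tendsto_intros)
      show ?thesis
      proof (cases "omext z")
        case (Some w)
        have lw: "(\<omega> \<longlongrightarrow> w) (at z within upper_half)"
          using bnd[rule_format, of x] Some zx by simp
        have "cmod w \<le> cmod z + 3*M*t"
          by (rule tendsto_le[OF ntriv lim1 tendsto_norm[OF lw] ev])
        then show ?thesis using Some zR unfolding C_def by auto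
      next
        case None
        have li: "filterlim \<omega> at_infinity (at z within upper_half)"
          using bnd[rule_format, of x] None zx by simp
        have "\<forall>\<^sub>F y in at z within upper_half. cmod y + 3*M*t < cmod z + 3*M*t + 1"
          by (rule order_tendstoD(2)[OF lim1]) simp
        moreover have "\<forall>\<^sub>F y in at z within upper_half. cmod (\<omega> y) > cmod z + 3*M*t + 1"
          using filterlim_at_infinity_imp_norm_at_top[OF li]
          unfolding filterlim_at_top_dense by blast
        ultimately have "\<forall>\<^sub>F y in at z within upper_half. False"
          using ev by eventually_elim simp
        with ntriv show ?thesis by (simp add: eventually_False)
      qed
    qed
  qed
  with Cpos show ?thesis by blast
qed

end
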